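(* Let $n\ge 1$, let $M\in \mathrm{Sp}(2n,\mathbb{F}_2)$ be the symplectic matrix of an $n$-qubit Clifford operator $U$, and let $0\le w\le n$. Then there exist vectors $u_1,\dots,u_{4w}\in\mathbb{F}_2^{2n}$ such that the matrix $$M' := M\, S_{u_1} S_{u_2}\cdots S_{u_{4w}}$$ (i.e. first apply $E_{u_1}$ to every row of $M$, then $E_{u_2}$, and so on) satisfies $e_iM'=e_i$ and $f_iM'=f_i$ for all $1\le i\le w$, and $bM'\in\mathrm{span}\{e_j,f_j : w<j\le n\}$ for every $b\in\{e_j,f_j: w<j\le n\}$. Equivalently, the Clifford operator $R_{\pi/4}(P_{u_{4w}})\cdots R_{\pi/4}(P_{u_1})$ composed with $U$ (in the order corresponding to $M'$) has, up to Pauli operators and phases, support only on the last $n-w$ qubits; i.e. $4w$ Pauli $\pi/4$ rotations suffice to clean a Clifford frame off $w$ qubits.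
   Context: Paulis and Cliffords are represented in the binary symplectic formalism. An $n$-qubit Pauli operator is identified (up to phase) with a row vector $v\in\mathbb{F}_2^{2n}$ via $P_v=\prod_{i=1}^n X_i^{v_i}Z_i^{v_{n+i}}$. The symplectic form is $\langle u,v\rangle=uJv^T$ with $J=\begin{bmatrix}0&I_n\\ I_n&0\end{bmatrix}$; $P_u,P_v$ commute iff $\langle u,v\rangle=0$. Let $e_1,\dots,e_{2n}$ be the standard basis of $\mathbb{F}_2^{2n}$ and $f_k:=e_{n+k}$ ($e_k$ corresponds to $X_k$, $f_k$ to $Z_k$). A Clifford $U$ is represented (ignoring Pauli corrections and phases) by a matrix $M_U$ with $M_UJM_U^T=J$, acting by $v\mapsto vM_U$ (conjugation $P\mapsto UPU^\dagger$); its $i$-th row is the image of the $i$-th basis vector. The Pauli $\pi/4$ rotation $R_{\pi/4}(P_u)$ maps $P\mapsto PP_u$ if $P$ anticommutes with $P_u$ and fixes $P$ otherwise; in symplectic form it acts as the transvection $E_u(v)=v+\langle u,v\rangle u$, whose matrix (row-vector convention $v\mapsto vS_u$) is denoted $S_u$. Each such rotation can be implemented by one logical Pauli product measurement with an ancilla. *)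

theory Defs
  imports "HOL-Library.Z2" "Jordan_Normal_Form.VS_Connect"
begin

definition Jmat :: "nat \<Rightarrow> bit mat" where
  "Jmat n = four_block_mat (0\<^sub>m n n) (1\<^sub>m n) (1\<^sub>m n) (0\<^sub>m n n)"

definition symplectic :: "nat \<Rightarrow> bit mat \<Rightarrow> bool" where
  "symplectic n M \<longleftrightarrow> M \<in> carrier_mat (2*n) (2*n) \<and> M * Jmat n * transpose_mat M = Jmat n"

definition rmult :: "bit vec \<Rightarrow> bit mat \<Rightarrow> bit vec" (infixl "\<cdot>\<^sub>r" 70) where
  "v \<cdot>\<^sub>r M = vec (dim_col M) (\<lambda>j. v \<bullet> col M j)"

definition sform :: "nat \<Rightarrow> bit vec \<Rightarrow> bit vec \<Rightarrow> bit" where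
  "sform n u v = u \<bullet> (Jmat n *\<^sub>v v)"

definition transv :: "nat \<Rightarrow> bit vec \<Rightarrow> bit vec \<Rightarrow> bit vec" where
  "transv n u v = v + sform n u v \<cdot>\<^sub>v u"

definition Smat :: "nat \<Rightarrow> bit vec \<Rightarrow> bit mat" where
  "Smat n u = mat_of_rows (2*n) (map (\<lambda>i. transv n u (unit_vec (2*n) i)) [0..<2*n])"

text \<open>standard basis, 1-based as in the paper: e_k ~ X_k, f_k = e_{n+k} ~ Z_k\<close>
definition ebas :: "nat \<Rightarrow> nat \<Rightarrow> bit vec" where
  "ebas n k = unit_vec (2*n) (k - 1)"

definition fbas :: "nat \<Rightarrow> nat \<Rightarrow> bit vec" where
  "fbas n k = unit_vec (2*n) (n + k - 1)"

definition span2 :: "nat \<Rightarrow> bit vec set \<Rightarrow> bit vec set" where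
  "span2 n S = LinearCombinations.module.span class_ring (module_vec TYPE(bit) (2*n)) S"

end

theory Submission
  imports Defs
begin


declare add_bit_eq_xor[simp del] mult_bit_eq_and[simp del]

lemma bit_self[simp]: "(a::bit) + a = 0"
  by (cases "a = 0") (auto simp: add_bit_eq_xor)
lemma bit_zz[simp]: "(0::bit) + 0 = 0" by simp

lemma bit_self2[simp]: "(a::bit) + (a + b) = b"
  by (metis add.assoc add_0 bit_self)

definition pp :: "nat \<Rightarrow> nat \<Rightarrow> nat" where
  "pp n k = (if k < n then n + k else k - n)"

lemma pp_lt: "k < 2*n \<Longrightarrow> pp n k < 2*n" by (auto simp: pp_def)
lemma pp_pp: "k < 2*n \<Longrightarrow> pp n (pp n k) = k" by (auto simp: pp_def)
lemma pp_inj: "k < 2*n \<Longrightarrow> j < 2*n \<Longrightarrow> pp n k = pp n j \<longleftrightarrow> k = j" by (auto simp: pp_def)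

lemma Jmat_carrier: "Jmat n \<in> carrier_mat (2*n) (2*n)"
  by (simp add: Jmat_def mult_2)

lemma Jmat_index: "k < 2*n \<Longrightarrow> j < 2*n \<Longrightarrow> Jmat n $$ (k,j) = (if j = pp n k then 1 else 0)"
  by (auto simp: Jmat_def pp_def)

lemma Jmat_mult: assumes v: "v \<in> carrier_vec (2*n)" and k: "k < 2*n"
  shows "(Jmat n *\<^sub>v v) $ k = v $ (pp n k)"
proof -
  have "(Jmat n *\<^sub>v v) $ k = (\<Sum>j<2*n. Jmat n $$ (k,j) * v $ j)"
    using k v Jmat_carrier[of n] by (simp add: scalar_prod_def lessThan_atLeast0)
  also have "\<dots> = (\<Sum>j<2*n. (if j = pp n k then v $ j else 0))"
    using k by (intro sum.cong) (auto simp: Jmat_index)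
  also have "\<dots> = v $ (pp n k)" using pp_lt[OF k] by simp
  finally show ?thesis .
qed

lemma sform_sum: assumes "u \<in> carrier_vec (2*n)" "v \<in> carrier_vec (2*n)"
  shows "sform n u v = (\<Sum>k<2*n. u $ k * v $ (pp n k))"
proof -
  have "sform n u v = (\<Sum>k\<in>{0..<2*n}. u $ k * (Jmat n *\<^sub>v v) $ k)"
    using assms Jmat_carrier[of n] by (simp add: sform_def scalar_prod_def)
  also have "\<dots> = (\<Sum>k<2*n. u $ k * v $ (pp n k))"
    using assms by (auto simp: lessThan_atLeast0 Jmat_mult intro!: sum.cong)
  finally show ?thesis .
qed

lemma sum_split2: "(\<Sum>k<n+m. f k) = (\<Sum>k<n. f k) + (\<Sum>k<m. f (n+k::nat))"
  by (induction m) (auto simp: add.assoc)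

lemma sform_split: assumes "u \<in> carrier_vec (2*n)" "v \<in> carrier_vec (2*n)"
  shows "sform n u v = (\<Sum>k<n. u $ k * v $ (n+k)) + (\<Sum>k<n. u $ (n+k) * v $ k)"
proof -
  have "sform n u v = (\<Sum>k<n+n. u $ k * v $ (pp n k))" using sform_sum[OF assms] by (simp add: mult_2)
  also have "\<dots> = (\<Sum>k<n. u $ k * v $ (pp n k)) + (\<Sum>k<n. u $ (n+k) * v $ (pp n (n+k)))"
    by (rule sum_split2)
  also have "\<dots> = (\<Sum>k<n. u $ k * v $ (n+k)) + (\<Sum>k<n. u $ (n+k) * v $ k)"
    by (intro arg_cong2[where f="(+)"] sum.cong) (auto simp: pp_def)
  finally show ?thesis .
qed


lemma sform_self: assumes "u \<in> carrier_vec (2*n)" shows "sform n u u = 0"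
  using sform_split[OF assms assms] by (simp add: mult.commute)

lemma sform_sym: assumes "u \<in> carrier_vec (2*n)" "v \<in> carrier_vec (2*n)"
  shows "sform n u v = sform n v u"
  using sform_split[OF assms] sform_split[OF assms(2,1)] by (simp add: mult.commute add.commute)

abbreviation C where "C n \<equiv> carrier_vec (2*n) :: bit vec set"

lemma unit_vec_index'[simp]: "j < m \<Longrightarrow> unit_vec m i $ j = (if j = i then 1 else 0)"
  by (simp add: unit_vec_def)

lemma sform_add_left: assumes "a \<in> C n" "b \<in> C n" "c \<in> C n"
  shows "sform n (a + b) c = sform n a c + sform n b c"
  using assms by (simp add: sform_sum sum.distrib distrib_right)

lemma sform_add_right: assumes "a \<in> C n" "b \<in> C n" "c \<in> C n"
  shows "sform n a (b + c) = sform n a b + sform n a c"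
  using assms by (simp add: sform_sum sum.distrib distrib_left pp_lt)

lemma sform_smult_left: assumes "a \<in> C n" "c \<in> C n"
  shows "sform n (x \<cdot>\<^sub>v a) c = x * sform n a c"
  using assms by (simp add: sform_sum sum_distrib_left mult.assoc)

lemma sform_smult_right: assumes "a \<in> C n" "c \<in> C n"
  shows "sform n a (x \<cdot>\<^sub>v c) = x * sform n a c"
  using assms by (simp add: sform_sum sum_distrib_left pp_lt mult.left_commute)

lemma sform_zero_left: assumes "c \<in> C n" shows "sform n (0\<^sub>v (2*n)) c = 0"
  using assms by (simp add: sform_sum)

lemma sform_unit_right: assumes "u \<in> C n" "i < 2*n"
  shows "sform n u (unit_vec (2*n) i) = u $ (pp n i)"
proof -
  have "sform n u (unit_vec (2*n) i) = (\<Sum>k<2*n. if k = pp n i then u $ k else 0)"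
    unfolding sform_sum[OF assms(1) unit_vec_carrier]
  proof (intro sum.cong refl)
    fix k assume "k \<in> {..<2*n}"
    then have k: "k < 2*n" by simp
    have "pp n k = i \<longleftrightarrow> k = pp n i" using k assms(2) pp_pp pp_lt by metis
    then show "u $ k * unit_vec (2*n) i $ pp n k = (if k = pp n i then u $ k else 0)"
      using k pp_lt[OF k] assms(2) by (cases "k = pp n i") auto
  qed
  also have "\<dots> = u $ (pp n i)" using assms pp_lt by simp
  finally show ?thesis .
qed

lemma sform_unit_left: assumes "v \<in> C n" "i < 2*n"
  shows "sform n (unit_vec (2*n) i) v = v $ (pp n i)"
  using sform_sym[OF unit_vec_carrier assms(1)] sform_unit_right[OF assms] by simp

lemma sform_units: assumes "i < 2*n" "j < 2*n"
  shows "sform n (unit_vec (2*n) i) (unit_vec (2*n) j) = (if i = pp n j then 1 else 0)"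
  using assms by (simp add: sform_unit_right pp_lt)

lemma transv_carrier[simp]: "u \<in> C n \<Longrightarrow> v \<in> C n \<Longrightarrow> transv n u v \<in> C n"
  by (simp add: transv_def)

lemma transv_hit: assumes "x \<in> C n" "y \<in> C n" "sform n x y = 1"
  shows "transv n (x + y) x = y"
proof -
  have "sform n (x + y) x = 1"
    using assms by (simp add: sform_add_left sform_self sform_sym[of y n x])
  then show ?thesis using assms by (intro eq_vecI) (auto simp: transv_def)
qed

lemma transv_fix: assumes "u \<in> C n" "v \<in> C n" "sform n u v = 0"
  shows "transv n u v = v"
  using assms by (intro eq_vecI) (auto simp: transv_def)

lemma transv_zero: assumes "v \<in> C n" shows "transv n (0\<^sub>v (2*n)) v = v"
  using assms by (simp add: transv_fix sform_zero_left)

lemma transv_pres: assumes "u \<in> C n" "a \<in> C n" "b \<in> C n"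
  shows "sform n (transv n u a) (transv n u b) = sform n a b"
proof -
  let ?s = "sform n u a" and ?t = "sform n u b"
  have "sform n (transv n u a) (transv n u b)
     = sform n a b + ?t * sform n a u + (?s * sform n u b + ?s * (?t * sform n u u))"
    using assms by (simp add: transv_def sform_add_left sform_add_right sform_smult_left sform_smult_right algebra_simps)
  also have "\<dots> = sform n a b + (?t * ?s + ?s * ?t)"
    using assms by (simp add: sform_self sform_sym[of a n u] add.assoc)
  also have "\<dots> = sform n a b" by (simp add: mult.commute)
  finally show ?thesis .
qed

lemma rmult_transpose: "v \<in> carrier_vec (dim_row A) \<Longrightarrow> v \<cdot>\<^sub>r A = transpose_mat A *\<^sub>v v"
  by (intro eq_vecI) (auto simp: rmult_def intro: comm_scalar_prod[of _ "dim_row A"])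

lemma dim_rmult[simp]: "dim_vec (v \<cdot>\<^sub>r A) = dim_col A"
  by (simp add: rmult_def)

lemma rmult_carrier[simp]: "v \<cdot>\<^sub>r A \<in> carrier_vec (dim_col A)"
  by (simp add: rmult_def)

lemma rmult_carrier2: "A \<in> carrier_mat nr nc \<Longrightarrow> v \<cdot>\<^sub>r A \<in> carrier_vec nc"
  by (simp add: rmult_def carrier_matD)

lemma rmult_mult: assumes "v \<in> carrier_vec nr" "A \<in> carrier_mat nr nc" "B \<in> carrier_mat nc nd"
  shows "v \<cdot>\<^sub>r (A * B) = (v \<cdot>\<^sub>r A) \<cdot>\<^sub>r B"
proof -
  have "v \<cdot>\<^sub>r (A * B) = transpose_mat (A * B) *\<^sub>v v" using assms by (simp add: rmult_transpose)
  also have "\<dots> = (transpose_mat B * transpose_mat A) *\<^sub>v v" using assms by (simp add: transpose_mult)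
  also have "\<dots> = transpose_mat B *\<^sub>v (transpose_mat A *\<^sub>v v)"
    using assms by (intro assoc_mult_mat_vec) auto
  also have "\<dots> = (v \<cdot>\<^sub>r A) \<cdot>\<^sub>r B" using assms by (simp add: rmult_transpose)
  finally show ?thesis .
qed

lemma Smat_carrier[simp]: "Smat n u \<in> carrier_mat (2*n) (2*n)"
  using mat_of_rows_carrier(1)[of "2*n" "map (\<lambda>i. transv n u (unit_vec (2*n) i)) [0..<2*n]"]
  by (simp add: Smat_def)

lemma Smat_dims[simp]: "dim_row (Smat n u) = 2*n" "dim_col (Smat n u) = 2*n"
  by (metis carrier_matD Smat_carrier)+

lemma Smat_index: "i < 2*n \<Longrightarrow> j < 2*n \<Longrightarrow> Smat n u $$ (i,j) = transv n u (unit_vec (2*n) i) $ j"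
  by (simp add: Smat_def mat_of_rows_index)

lemma rmult_Smat: assumes v: "v \<in> C n" and u: "u \<in> C n"
  shows "v \<cdot>\<^sub>r Smat n u = transv n u v"
proof (rule eq_vecI)
  show "dim_vec (v \<cdot>\<^sub>r Smat n u) = dim_vec (transv n u v)" using u v by (simp add: transv_def)
  fix j assume "j < dim_vec (transv n u v)"
  then have j: "j < 2*n" using u v by (simp add: transv_def)
  have "(v \<cdot>\<^sub>r Smat n u) $ j = (\<Sum>i<2*n. v $ i * Smat n u $$ (i,j))"
    using j v by (simp add: rmult_def scalar_prod_def lessThan_atLeast0)
  also have "\<dots> = (\<Sum>i<2*n. (if i = j then v $ i else 0) + (v $ i * u $ (pp n i)) * u $ j)"
  proof (intro sum.cong refl)
    fix i assume "i \<in> {..<2*n}"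
    then have i: "i < 2*n" by simp
    have "Smat n u $$ (i,j) = unit_vec (2*n) i $ j + u $ (pp n i) * u $ j"
      using i j u by (simp add: Smat_index transv_def sform_unit_right)
    then show "v $ i * Smat n u $$ (i,j) = (if i = j then v $ i else 0) + (v $ i * u $ (pp n i)) * u $ j"
      using i j by (simp add: distrib_left mult.assoc)
  qed
  also have "\<dots> = v $ j + sform n v u * u $ j"
    using j u v by (simp add: sum.distrib sform_sum sum_distrib_right)
  also have "\<dots> = transv n u v $ j"
    using j u v by (simp add: transv_def sform_sym[of u n v])
  finally show "(v \<cdot>\<^sub>r Smat n u) $ j = transv n u v $ j" .
qed

definition tr :: "nat \<Rightarrow> bit vec list \<Rightarrow> bit vec \<Rightarrow> bit vec" where
  "tr n us v = foldl (\<lambda>v u. transv n u v) v us"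

lemma tr_simps[simp]: "tr n [] v = v" "tr n (u # us) v = tr n us (transv n u v)"
  "tr n (us @ vs) v = tr n vs (tr n us v)"
  by (simp_all add: tr_def)

lemma tr_carrier: "set us \<subseteq> C n \<Longrightarrow> v \<in> C n \<Longrightarrow> tr n us v \<in> C n"
  by (induction us arbitrary: v) auto

lemma foldl_rmult: assumes "M \<in> carrier_mat (2*n) (2*n)" "v \<in> C n" "set us \<subseteq> C n"
  shows "v \<cdot>\<^sub>r foldl (*) M (map (Smat n) us) = tr n us (v \<cdot>\<^sub>r M)"
  using assms
proof (induction us arbitrary: M)
  case Nil
  then show ?case by simp
next
  case (Cons u us)
  have M: "M \<in> carrier_mat (2*n) (2*n)" and v: "v \<in> C n" and u: "u \<in> C n"
    and us: "set us \<subseteq> C n" using Cons.prems by auto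
  have S: "Smat n u \<in> carrier_mat (2*n) (2*n)" by (rule Smat_carrier)
  have MS: "M * Smat n u \<in> carrier_mat (2*n) (2*n)" using M S by (rule mult_carrier_mat)
  have vM: "v \<cdot>\<^sub>r M \<in> C n" using M rmult_carrier[of v M] by (simp only: carrier_matD)
  have step: "v \<cdot>\<^sub>r (M * Smat n u) = transv n u (v \<cdot>\<^sub>r M)"
    using rmult_mult[OF v M S] rmult_Smat[OF vM u] by simp
  have "foldl (*) M (map (Smat n) (u # us)) = foldl (*) (M * Smat n u) (map (Smat n) us)"
    by simp
  then show ?case using Cons.IH[OF MS v us] step by simp
qed

definition good :: "nat \<Rightarrow> (bit vec \<Rightarrow> bit vec) \<Rightarrow> bool" where
  "good n f \<longleftrightarrow> (\<forall>v\<in>C n. f v \<in> C n) \<and> (\<forall>a\<in>C n. \<forall>b\<in>C n. sform n (f a) (f b) = sform n a b)"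

lemma good_comp: "good n f \<Longrightarrow> good n g \<Longrightarrow> good n (\<lambda>v. g (f v))"
  by (simp add: good_def)

lemma good_transv: "u \<in> C n \<Longrightarrow> good n (transv n u)"
  by (simp add: good_def transv_pres)

lemma good_tr: "set us \<subseteq> C n \<Longrightarrow> good n (tr n us)"
proof (induction us)
  case Nil
  then show ?case by (simp add: good_def)
next
  case (Cons u us)
  then have "good n (\<lambda>v. tr n us (transv n u v))"
    using Cons by (intro good_comp[OF good_transv]) auto
  then show ?case by simp
qed

lemma good_rmult: assumes "symplectic n M" shows "good n (\<lambda>v. v \<cdot>\<^sub>r M)"
proof -
  have M: "M \<in> carrier_mat (2*n) (2*n)" and MJ: "M * Jmat n * transpose_mat M = Jmat n"
    using assms by (auto simp: symplectic_def)
  have "sform n (a \<cdot>\<^sub>r M) (b \<cdot>\<^sub>r M) = sform n a b" if a: "a \<in> C n" and b: "b \<in> C n" for a b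
  proof -
    have J: "Jmat n \<in> carrier_mat (2*n) (2*n)" by (rule Jmat_carrier)
    have "sform n (a \<cdot>\<^sub>r M) (b \<cdot>\<^sub>r M) = (transpose_mat M *\<^sub>v a) \<bullet> (Jmat n *\<^sub>v (transpose_mat M *\<^sub>v b))"
      using M a b by (simp add: sform_def rmult_transpose)
    also have "\<dots> = a \<bullet> (M *\<^sub>v (Jmat n *\<^sub>v (transpose_mat M *\<^sub>v b)))"
      using M a b J by (intro transpose_vec_mult_scalar) auto
    also have "M *\<^sub>v (Jmat n *\<^sub>v (transpose_mat M *\<^sub>v b)) = (M * Jmat n * transpose_mat M) *\<^sub>v b"
    proof -
      have MJ': "M * Jmat n \<in> carrier_mat (2*n) (2*n)" using M J by (rule mult_carrier_mat)
      have Mt: "transpose_mat M \<in> carrier_mat (2*n) (2*n)" using M by simp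
      have "(M * Jmat n * transpose_mat M) *\<^sub>v b = (M * Jmat n) *\<^sub>v (transpose_mat M *\<^sub>v b)"
        using MJ' Mt b by (rule assoc_mult_mat_vec)
      also have "\<dots> = M *\<^sub>v (Jmat n *\<^sub>v (transpose_mat M *\<^sub>v b))"
        using M J Mt b by (intro assoc_mult_mat_vec) auto
      finally show ?thesis by simp
    qed
    finally show ?thesis using MJ by (simp add: sform_def)
  qed
  then show ?thesis using M by (auto simp: good_def rmult_carrier2)
qed


definition Fx :: "nat \<Rightarrow> nat \<Rightarrow> nat set" where
  "Fx n p = {k. k < p} \<union> {k. n \<le> k \<and> k < n + p}"

lemma Fx_lt: "p \<le> n \<Longrightarrow> k \<in> Fx n p \<Longrightarrow> k < 2*n" by (auto simp: Fx_def)
lemma Fx_pp: "p \<le> n \<Longrightarrow> k \<in> Fx n p \<Longrightarrow> pp n k \<in> Fx n p" by (auto simp: Fx_def pp_def)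
lemma Fx_p: "p < n \<Longrightarrow> p \<notin> Fx n p" by (auto simp: Fx_def)
lemma Fx_np: "n + p \<notin> Fx n p" by (auto simp: Fx_def)
lemma Fx_Suc: "Fx n (Suc p) = insert p (insert (n+p) (Fx n p))" by (auto simp: Fx_def)
lemma pp_p: "p < n \<Longrightarrow> pp n p = n + p" by (simp add: pp_def)
lemma pp_np: "pp n (n + p) = p" by (simp add: pp_def)

lemma unit_Fx: "p \<le> n \<Longrightarrow> j \<in> Fx n p \<Longrightarrow> i \<notin> Fx n p \<Longrightarrow> unit_vec (2*n) i $ j = 0"
proof -
  assume a: "p \<le> n" "j \<in> Fx n p" "i \<notin> Fx n p"
  then have "i \<noteq> j" "j < 2*n" using Fx_lt[of p n j] by auto
  then show ?thesis by simp
qed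

lemma zero_on: assumes g: "good n f" and p: "p \<le> n"
  and fx: "\<forall>k\<in>Fx n p. f (unit_vec (2*n) k) = unit_vec (2*n) k"
  and k: "k < 2*n" and j: "j \<in> Fx n p"
  shows "f (unit_vec (2*n) k) $ j = (if j = k then 1 else 0)"
proof -
  have j2: "j < 2*n" using Fx_lt[OF p j] .
  have pj: "pp n j \<in> Fx n p" using Fx_pp[OF p j] .
  have pj2: "pp n j < 2*n" using pp_lt[OF j2] .
  have fk: "f (unit_vec (2*n) k) \<in> C n" using g k by (simp add: good_def)
  have "f (unit_vec (2*n) k) $ j = f (unit_vec (2*n) k) $ pp n (pp n j)" using pp_pp[OF j2] by simp
  also have "\<dots> = sform n (f (unit_vec (2*n) k)) (unit_vec (2*n) (pp n j))"
    using sform_unit_right[OF fk pj2] by simp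
  also have "\<dots> = sform n (f (unit_vec (2*n) k)) (f (unit_vec (2*n) (pp n j)))"
    using fx pj by simp
  also have "\<dots> = sform n (unit_vec (2*n) k) (unit_vec (2*n) (pp n j))"
    using g k pj2 by (simp add: good_def)
  also have "\<dots> = (if j = k then 1 else 0)"
    using sform_units[OF k pj2] pp_pp[OF j2] by auto
  finally show ?thesis .
qed

lemma fixes_lem: assumes "u \<in> C n" "\<forall>j\<in>Fx n p. u $ j = 0" "k \<in> Fx n p" "p \<le> n"
  shows "transv n u (unit_vec (2*n) k) = unit_vec (2*n) k"
  using assms Fx_lt[OF assms(4,3)] Fx_pp[OF assms(4,3)]
  by (intro transv_fix) (auto simp: sform_unit_right)

lemma lemA: assumes p: "p < n" and x: "x \<in> C n" and xz: "\<forall>j\<in>Fx n p. x $ j = 0"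
  and x0: "x \<noteq> 0\<^sub>v (2*n)"
  shows "\<exists>u1 u2. u1 \<in> C n \<and> u2 \<in> C n \<and> (\<forall>j\<in>Fx n p. u1 $ j = 0 \<and> u2 $ j = 0) \<and>
     transv n u2 (transv n u1 x) = unit_vec (2*n) p"
proof -
  let ?U = "unit_vec (2*n)"
  have p2: "p < 2*n" and np2: "n + p < 2*n" using p by auto
  have Fj: "j < 2*n" if "j \<in> Fx n p" for j using Fx_lt[OF _ that] p by simp
  show ?thesis
  proof (cases "x $ (n+p) = 1")
    case True
    have "sform n x (?U p) = 1" using True x p2 by (simp add: sform_unit_right pp_p[OF p])
    then have "transv n (x + ?U p) x = ?U p" using x by (intro transv_hit) auto
    moreover have "\<forall>j\<in>Fx n p. (x + ?U p) $ j = 0 \<and> 0\<^sub>v (2*n) $ j = 0"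
      using xz Fj Fx_p[OF p] p by (auto simp: unit_Fx)
    ultimately show ?thesis using x
      by (intro exI[of _ "x + ?U p"] exI[of _ "0\<^sub>v (2*n)"]) (auto simp: transv_zero)
  next
    case False
    then have xnp: "x $ (n+p) = 0" by simp
    show ?thesis
    proof (cases "x $ p = 1")
      case True
      have "sform n x (?U (n+p)) = 1" using True x np2 by (simp add: sform_unit_right pp_np)
      then have 1: "transv n (x + ?U (n+p)) x = ?U (n+p)" using x by (intro transv_hit) auto
      have "sform n (?U (n+p)) (?U p) = 1" using np2 p2 by (simp add: sform_units pp_p[OF p])
      then have 2: "transv n (?U (n+p) + ?U p) (?U (n+p)) = ?U p" by (intro transv_hit) auto
      have "\<forall>j\<in>Fx n p. (x + ?U (n+p)) $ j = 0 \<and> (?U (n+p) + ?U p :: bit vec) $ j = 0"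
        using xz Fj Fx_p[OF p] Fx_np[of n p] p by (auto simp: unit_Fx)
      then show ?thesis using x 1 2
        by (intro exI[of _ "x + ?U (n+p)"] exI[of _ "?U (n+p) + ?U p"]) auto
    next
      case False
      then have xp: "x $ p = 0" by simp
      obtain c where c: "c < 2*n" "x $ c \<noteq> 0"
      proof (rule ccontr)
        assume "\<not> thesis"
        then have "\<forall>c<2*n. x $ c = 0" using that by blast
        then have "x = 0\<^sub>v (2*n)" using x by (intro eq_vecI) auto
        then show False using x0 by simp
      qed
      then have xc: "x $ c = 1" by simp
      have cF: "c \<notin> Fx n p" using xz c by auto
      have cp: "c \<noteq> p" "c \<noteq> n + p" using xc xp xnp by auto
      have pc2: "pp n c < 2*n" using pp_lt[OF c(1)] .
      have pcF: "pp n c \<notin> Fx n p" using cF Fx_pp[of p n "pp n c"] p pp_pp[OF c(1)] by auto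
      have pcnp: "pp n c \<noteq> n + p" using cp pp_pp[OF c(1)] pp_np[of n p] by metis
      define z :: "bit vec" where "z = ?U (n+p) + ?U (pp n c)"
      have z: "z \<in> C n" by (simp add: z_def)
      have "sform n x z = 1"
        using x np2 pc2 xp xc by (simp add: z_def sform_add_right sform_unit_right pp_np pp_pp[OF c(1)])
      then have 1: "transv n (x + z) x = z" using x z by (intro transv_hit) auto
      have "sform n z (?U p) = z $ (n + p)" using z p2 by (simp add: sform_unit_right pp_p[OF p])
      also have "\<dots> = 1" using np2 pc2 pcnp by (simp add: z_def)
      finally have 2: "transv n (z + ?U p) z = ?U p" using z by (intro transv_hit) auto
      have "\<forall>j\<in>Fx n p. (x + z) $ j = 0 \<and> (z + ?U p) $ j = 0"
        using xz Fj Fx_p[OF p] Fx_np[of n p] pcF p by (auto simp: z_def unit_Fx)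
      then show ?thesis using x z 1 2
        by (intro exI[of _ "x + z"] exI[of _ "z + ?U p"]) auto
    qed
  qed
qed


lemma lemB: assumes p: "p < n" and y: "y \<in> C n" and yz: "\<forall>j\<in>Fx n p. y $ j = 0"
  and y1: "y $ (n+p) = 1"
  shows "\<exists>u3 u4. u3 \<in> C n \<and> u4 \<in> C n \<and> (\<forall>j\<in>Fx n p. u3 $ j = 0 \<and> u4 $ j = 0) \<and>
     u3 $ (n+p) = 0 \<and> u4 $ (n+p) = 0 \<and>
     transv n u4 (transv n u3 y) = unit_vec (2*n) (n+p)"
proof -
  let ?U = "unit_vec (2*n)"
  have p2: "p < 2*n" and np2: "n + p < 2*n" using p by auto
  have Fj: "j < 2*n" if "j \<in> Fx n p" for j using Fx_lt[OF _ that] p by simp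
  show ?thesis
  proof (cases "y $ p = 1")
    case True
    have "sform n y (?U (n+p)) = 1" using True y np2 by (simp add: sform_unit_right pp_np)
    then have "transv n (y + ?U (n+p)) y = ?U (n+p)" using y by (intro transv_hit) auto
    moreover have "\<forall>j\<in>Fx n p. (y + ?U (n+p)) $ j = 0 \<and> 0\<^sub>v (2*n) $ j = (0::bit)"
      using yz Fj Fx_np[of n p] p by (auto simp: unit_Fx)
    moreover have "(y + ?U (n+p)) $ (n+p) = 0" using y1 np2 y by simp
    ultimately show ?thesis using y np2
      by (intro exI[of _ "y + ?U (n+p)"] exI[of _ "0\<^sub>v (2*n)"]) (auto simp: transv_zero)
  next
    case False
    then have yp: "y $ p = 0" by simp
    define z :: "bit vec" where "z = ?U p + ?U (n+p)"
    have z: "z \<in> C n" by (simp add: z_def)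
    have "sform n y z = 1"
      using y np2 p2 yp y1 by (simp add: z_def sform_add_right sform_unit_right pp_np pp_p[OF p])
    then have 1: "transv n (y + z) y = z" using y z by (intro transv_hit) auto
    have "sform n z (?U (n+p)) = z $ p" using z np2 by (simp add: sform_unit_right pp_np)
    also have "\<dots> = 1" using np2 p2 by (simp add: z_def)
    finally have 2: "transv n (z + ?U (n+p)) z = ?U (n+p)" using z by (intro transv_hit) auto
    have "\<forall>j\<in>Fx n p. (y + z) $ j = 0 \<and> (z + ?U (n+p)) $ j = 0"
      using yz Fj Fx_p[OF p] Fx_np[of n p] p by (auto simp: z_def unit_Fx)
    moreover have "(y + z) $ (n+p) = 0" "(z + ?U (n+p)) $ (n+p) = 0"
      using y y1 np2 p2 by (auto simp: z_def)
    ultimately show ?thesis using y z 1 2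
      by (intro exI[of _ "y + z"] exI[of _ "z + ?U (n+p)"]) auto
  qed
qed

lemma claim: assumes g: "good n f"
  shows "p \<le> n \<Longrightarrow> \<exists>us. length us = 4 * p \<and> set us \<subseteq> C n \<and>
     (\<forall>k\<in>Fx n p. tr n us (f (unit_vec (2*n) k)) = unit_vec (2*n) k)"
proof (induction p)
  case 0
  then show ?case by (intro exI[of _ "[]"]) (auto simp: Fx_def)
next
  case (Suc p)
  let ?U = "unit_vec (2*n)"
  have p: "p < n" using Suc.prems by simp
  have pn: "p \<le> n" using p by simp
  have p2: "p < 2*n" and np2: "n + p < 2*n" using p by auto
  obtain us where us: "length us = 4 * p" "set us \<subseteq> C n"
    and fx: "\<forall>k\<in>Fx n p. tr n us (f (?U k)) = ?U k" using Suc.IH pn by auto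
  define g1 where "g1 = (\<lambda>v. tr n us (f v))"
  have G1: "good n g1" unfolding g1_def using g good_tr[OF us(2)] by (rule good_comp)
  have fx1: "\<forall>k\<in>Fx n p. g1 (?U k) = ?U k" using fx by (simp add: g1_def)
  define x where "x = g1 (?U p)"
  have x: "x \<in> C n" using G1 p2 by (simp add: good_def x_def)
  have xz: "\<forall>j\<in>Fx n p. x $ j = 0"
    using zero_on[OF G1 pn fx1 p2] Fx_p[OF p] unfolding x_def by auto
  have "sform n x (g1 (?U (n+p))) = sform n (?U p) (?U (n+p))"
    using G1 p2 np2 by (simp add: good_def x_def)
  also have "\<dots> = 1" using p2 np2 by (simp add: sform_units pp_np)
  finally have sx: "sform n x (g1 (?U (n+p))) = 1" .
  have x0: "x \<noteq> 0\<^sub>v (2*n)"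
  proof
    assume "x = 0\<^sub>v (2*n)"
    then have "sform n x (g1 (?U (n+p))) = 0" using G1 np2 by (simp add: good_def sform_zero_left)
    then show False using sx by simp
  qed
  obtain u1 u2 where u12: "u1 \<in> C n" "u2 \<in> C n" "\<forall>j\<in>Fx n p. u1 $ j = 0 \<and> u2 $ j = 0"
    "transv n u2 (transv n u1 x) = ?U p" using lemA[OF p x xz x0] by blast
  define g2 where "g2 = (\<lambda>v. transv n u2 (transv n u1 (g1 v)))"
  have G2: "good n g2" unfolding g2_def
    using good_comp[OF good_comp[OF G1 good_transv[OF u12(1)]] good_transv[OF u12(2)]] .
  have fx2: "\<forall>k\<in>Fx n p. g2 (?U k) = ?U k"
  proof
    fix k assume k: "k \<in> Fx n p"
    have "transv n u1 (?U k) = ?U k" using fixes_lem[of u1 n p k] u12 k pn by blast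
    moreover have "transv n u2 (?U k) = ?U k" using fixes_lem[of u2 n p k] u12 k pn by blast
    ultimately show "g2 (?U k) = ?U k" using fx1 k by (simp add: g2_def)
  qed
  have g2p: "g2 (?U p) = ?U p" using u12(4) by (simp add: g2_def x_def)
  define y where "y = g2 (?U (n+p))"
  have y: "y \<in> C n" using G2 np2 by (simp add: good_def y_def)
  have yz: "\<forall>j\<in>Fx n p. y $ j = 0"
    using zero_on[OF G2 pn fx2 np2] Fx_np[of n p] unfolding y_def by auto
  have "y $ (n+p) = sform n (?U p) y" using y p2 by (simp add: sform_unit_left pp_p[OF p])
  also have "\<dots> = sform n (g2 (?U p)) (g2 (?U (n+p)))" using g2p by (simp add: y_def)
  also have "\<dots> = sform n (?U p) (?U (n+p))" using G2 p2 np2 by (simp add: good_def)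
  also have "\<dots> = 1" using p2 np2 by (simp add: sform_units pp_np)
  finally have y1: "y $ (n+p) = 1" .
  obtain u3 u4 where u34: "u3 \<in> C n" "u4 \<in> C n" "\<forall>j\<in>Fx n p. u3 $ j = 0 \<and> u4 $ j = 0"
    "u3 $ (n+p) = 0" "u4 $ (n+p) = 0"
    "transv n u4 (transv n u3 y) = ?U (n+p)" using lemB[OF p y yz y1] by blast
  have fixp: "transv n u (?U p) = ?U p" if "u \<in> C n" "u $ (n+p) = 0" for u
    using that p2 by (intro transv_fix) (auto simp: sform_unit_right pp_p[OF p])
  have trall: "tr n (us @ [u1, u2, u3, u4]) (f v) = transv n u4 (transv n u3 (g2 v))" for v
    by (simp add: g2_def g1_def)
  show ?case
  proof (intro exI[of _ "us @ [u1, u2, u3, u4]"] conjI)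
    show "length (us @ [u1, u2, u3, u4]) = 4 * Suc p" using us by simp
    show "set (us @ [u1, u2, u3, u4]) \<subseteq> C n" using us u12 u34 by auto
    show "\<forall>k\<in>Fx n (Suc p). tr n (us @ [u1, u2, u3, u4]) (f (?U k)) = ?U k"
      unfolding trall
    proof
      fix k assume "k \<in> Fx n (Suc p)"
      then consider "k \<in> Fx n p" | "k = p" | "k = n + p" by (auto simp: Fx_Suc)
      then show "transv n u4 (transv n u3 (g2 (?U k))) = ?U k"
      proof cases
        case 1
        have "transv n u3 (?U k) = ?U k" using fixes_lem[of u3 n p k] u34 1 pn by blast
        moreover have "transv n u4 (?U k) = ?U k" using fixes_lem[of u4 n p k] u34 1 pn by blast
        ultimately show ?thesis using fx2 1 by simp
      next
        case 2
        then show ?thesis using g2p u34 fixp by simp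
      next
        case 3
        then show ?thesis using u34(6) by (simp add: y_def)
      qed
    qed
  qed
qed


lemma span_lem: assumes p: "p \<le> n" and v: "v \<in> C n" and vz: "\<forall>j\<in>Fx n p. v $ j = 0"
  shows "v \<in> span2 n (ebas n ` {p<..n} \<union> fbas n ` {p<..n})"
proof -
  interpret V: vec_space "TYPE(bit)" "2*n" .
  define S where "S = ebas n ` {p<..n} \<union> fbas n ` {p<..n}"
  have SC: "S \<subseteq> C n" by (auto simp: S_def ebas_def fbas_def)
  have inS: "unit_vec (2*n) k \<in> S" if "k < 2*n" "k \<notin> Fx n p" for k
  proof (cases "k < n")
    case True
    then have "k \<ge> p" using that by (auto simp: Fx_def)
    then have "ebas n (k+1) = unit_vec (2*n) k" "k + 1 \<in> {p<..n}" using True by (auto simp: ebas_def)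
    then show ?thesis unfolding S_def by (metis UnI1 image_eqI)
  next
    case False
    then have "k \<ge> n + p" using that by (auto simp: Fx_def)
    then have "fbas n (k-n+1) = unit_vec (2*n) k" "k - n + 1 \<in> {p<..n}" using False that by (auto simp: fbas_def)
    then show ?thesis unfolding S_def by (metis UnI2 image_eqI)
  qed
  have "vec (2*n) (\<lambda>k. if k < m then v $ k else 0) \<in> V.span S" if "m \<le> 2*n" for m
    using that
  proof (induction m)
    case 0
    have "vec (2*n) (\<lambda>k. if k < 0 then v $ k else 0) = 0\<^sub>v (2*n)" by (intro eq_vecI) auto
    then show ?case using V.span_zero by simp
  next
    case (Suc m)
    have IH: "vec (2*n) (\<lambda>k. if k < m then v $ k else 0) \<in> V.span S" using Suc by simp
    show ?case
    proof (cases "m \<in> Fx n p")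
      case True
      have "vec (2*n) (\<lambda>k. if k < Suc m then v $ k else 0) = vec (2*n) (\<lambda>k. if k < m then v $ k else 0)"
        using True vz by (intro eq_vecI) (auto simp: less_Suc_eq)
      then show ?thesis using IH by simp
    next
      case False
      have m: "m < 2*n" using Suc by simp
      have "vec (2*n) (\<lambda>k. if k < Suc m then v $ k else 0) =
          vec (2*n) (\<lambda>k. if k < m then v $ k else 0) + v $ m \<cdot>\<^sub>v unit_vec (2*n) m"
        using m by (intro eq_vecI) (auto simp: less_Suc_eq)
      moreover have "v $ m \<cdot>\<^sub>v unit_vec (2*n) m \<in> V.span S"
        using V.smult_in_span[OF SC V.span_mem[OF SC inS[OF m False]]] .
      ultimately show ?thesis using V.span_add1[OF SC IH] by simp
    qed
  qed
  from this[of "2*n"] have "vec (2*n) (\<lambda>k. if k < 2*n then v $ k else 0) \<in> V.span S" by simp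
  moreover have "vec (2*n) (\<lambda>k. if k < 2*n then v $ k else 0) = v" using v by (intro eq_vecI) auto
  ultimately show ?thesis by (simp add: span2_def S_def)
qed


theorem lemmaA1:
  fixes n w :: nat and M :: "bit mat"
  assumes "n \<ge> 1" and "symplectic n M" and "w \<le> n"
  shows "\<exists>us :: bit vec list. length us = 4 * w \<and> set us \<subseteq> carrier_vec (2*n) \<and>
    (let M' = foldl (*) M (map (Smat n) us) in
      (\<forall>i \<in> {1..w}. ebas n i \<cdot>\<^sub>r M' = ebas n i \<and> fbas n i \<cdot>\<^sub>r M' = fbas n i) \<and>
      (\<forall>b \<in> ebas n ` {w<..n} \<union> fbas n ` {w<..n}.
          b \<cdot>\<^sub>r M' \<in> span2 n (ebas n ` {w<..n} \<union> fbas n ` {w<..n})))"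
proof -
  have M: "M \<in> carrier_mat (2*n) (2*n)" using assms(2) by (simp add: symplectic_def)
  have G: "good n (\<lambda>v. v \<cdot>\<^sub>r M)" using good_rmult[OF assms(2)] .
  obtain us where us: "length us = 4 * w" "set us \<subseteq> C n"
    and fx: "\<forall>k\<in>Fx n w. tr n us (unit_vec (2*n) k \<cdot>\<^sub>r M) = unit_vec (2*n) k"
    using claim[OF G assms(3)] by blast
  define M' where "M' = foldl (*) M (map (Smat n) us)"
  have RM: "v \<cdot>\<^sub>r M' = tr n us (v \<cdot>\<^sub>r M)" if "v \<in> C n" for v
    unfolding M'_def using foldl_rmult[OF M that us(2)] .
  have G2: "good n (\<lambda>v. tr n us (v \<cdot>\<^sub>r M))" using G good_tr[OF us(2)] by (rule good_comp)
  have part1: "\<forall>i \<in> {1..w}. ebas n i \<cdot>\<^sub>r M' = ebas n i \<and> fbas n i \<cdot>\<^sub>r M' = fbas n i"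
  proof
    fix i assume i: "i \<in> {1..w}"
    have "i - 1 \<in> Fx n w" "n + i - 1 \<in> Fx n w" using i by (auto simp: Fx_def)
    then show "ebas n i \<cdot>\<^sub>r M' = ebas n i \<and> fbas n i \<cdot>\<^sub>r M' = fbas n i"
      using fx RM by (simp add: ebas_def fbas_def)
  qed
  have part2: "b \<cdot>\<^sub>r M' \<in> span2 n (ebas n ` {w<..n} \<union> fbas n ` {w<..n})"
    if b: "b \<in> ebas n ` {w<..n} \<union> fbas n ` {w<..n}" for b
  proof -
    obtain k where k: "b = unit_vec (2*n) k" "k < 2*n" "k \<notin> Fx n w"
    proof -
      from b consider i where "i \<in> {w<..n}" "b = ebas n i" | i where "i \<in> {w<..n}" "b = fbas n i" by blast
      then show ?thesis
      proof cases
        case 1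
        then have "b = unit_vec (2*n) (i - 1)" "i - 1 < 2*n" "i - 1 \<notin> Fx n w"
          by (auto simp: ebas_def Fx_def)
        then show ?thesis by (rule that)
      next
        case 2
        then have "b = unit_vec (2*n) (n + i - 1)" "n + i - 1 < 2*n" "n + i - 1 \<notin> Fx n w"
          by (auto simp: fbas_def Fx_def)
        then show ?thesis by (rule that)
      qed
    qed
    have bC: "b \<in> C n" using k by simp
    have "\<forall>j\<in>Fx n w. tr n us (b \<cdot>\<^sub>r M) $ j = 0"
      using zero_on[OF G2 assms(3) fx k(2)] k by auto
    moreover have "tr n us (b \<cdot>\<^sub>r M) \<in> C n" using G2 bC by (simp add: good_def)
    ultimately show ?thesis using span_lem[OF assms(3)] RM[OF bC] by simp
  qed
  have main: "(\<forall>i \<in> {1..w}. ebas n i \<cdot>\<^sub>r M' = ebas n i \<and> fbas n i \<cdot>\<^sub>r M' = fbas n i) \<and>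
      (\<forall>b \<in> ebas n ` {w<..n} \<union> fbas n ` {w<..n}.
          b \<cdot>\<^sub>r M' \<in> span2 n (ebas n ` {w<..n} \<union> fbas n ` {w<..n}))"
    by (rule conjI[OF part1 ballI[OF part2]])
  show ?thesis
    by (intro exI[of _ us] conjI us(1) us(2)) (unfold Let_def, use main in \<open>unfold M'_def\<close>, assumption)
qed

end
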